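(* For every $n\equiv 15 \pmod{16}$ (with $n\geq 15$), there exists an almost 2-perfect maximum 8-cycle packing of $K_n$.
   Context: An 8-cycle packing of $K_n$ on vertex set $\mathcal{X}$ is a triple $(\mathcal{X},\mathcal{C},\mathcal{L})$ with $\mathcal{C}$ a collection of pairwise edge-disjoint 8-cycles of $K_n$ and leave $\mathcal{L}$ the set of edges in no cycle of $\mathcal{C}$; it is maximum if $|\mathcal{L}|$ is minimum among all 8-cycle packings of $K_n$. For an 8-cycle $C$, an inside 8-cycle of $C$ is an 8-cycle on the same vertex set sharing no edge with $C$. The packing is almost 2-perfect if one can choose for each $C\in\mathcal{C}$ an inside 8-cycle $C'$ such that $(\mathcal{X},\{C'\},\mathcal{L})$ is again an 8-cycle packing with the same leave. *)

theory Defs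
  imports Main
begin

definition kedges :: "'a set \<Rightarrow> 'a set set" where
  "kedges X = {e. e \<subseteq> X \<and> card e = 2}"

definition cycle8 :: "'a set \<Rightarrow> 'a set set \<Rightarrow> bool" where
  "cycle8 X c \<longleftrightarrow> (\<exists>v :: nat \<Rightarrow> 'a. inj_on v {..<8} \<and> v ` {..<8} \<subseteq> X \<and>
      c = {{v i, v ((i + 1) mod 8)} | i. i < 8})"

definition packing8 :: "'a set \<Rightarrow> 'a set set set \<Rightarrow> 'a set set \<Rightarrow> bool" where
  "packing8 X C L \<longleftrightarrow> (\<forall>c\<in>C. cycle8 X c) \<and> pairwise (\<lambda>a b. a \<inter> b = {}) C
      \<and> L = kedges X - \<Union>C"

definition max_packing8 :: "'a set \<Rightarrow> 'a set set set \<Rightarrow> 'a set set \<Rightarrow> bool" where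
  "max_packing8 X C L \<longleftrightarrow> packing8 X C L \<and>
      (\<forall>C' L'. packing8 X C' L' \<longrightarrow> card L \<le> card L')"

definition inside8 :: "'a set set \<Rightarrow> 'a set set \<Rightarrow> bool" where
  "inside8 c c' \<longleftrightarrow> cycle8 (\<Union>c) c' \<and> \<Union>c' = \<Union>c \<and> c \<inter> c' = {}"

definition almost_2perfect8 :: "'a set \<Rightarrow> 'a set set set \<Rightarrow> 'a set set \<Rightarrow> bool" where
  "almost_2perfect8 X C L \<longleftrightarrow>
     (\<exists>f. (\<forall>c\<in>C. inside8 c (f c)) \<and> packing8 X (f ` C) L)"

end

theory Submission
  imports Defs
begin


lemma cycle8_img:
  assumes "cycle8 X c"
  obtains v :: "nat \<Rightarrow> 'a" where "inj_on v {..<8}" "v ` {..<8} \<subseteq> X"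
    "c = (\<lambda>i. {v i, v (Suc i mod 8)}) ` {..<8}"
proof -
  from assms obtain v :: "nat \<Rightarrow> 'a" where v: "inj_on v {..<8}" "v ` {..<8} \<subseteq> X"
      "c = {{v i, v ((i + 1) mod 8)} | i. i < 8}" unfolding cycle8_def by blast
  have "c = (\<lambda>i. {v i, v (Suc i mod 8)}) ` {..<8}" unfolding v(3) by (auto simp: image_def)
  with v that show ?thesis by blast
qed

lemma mod8_ne: "(i::nat) < 8 \<Longrightarrow> Suc i mod 8 \<noteq> i" by presburger

lemma card_cycle8:
  assumes "cycle8 X c" shows "card c = 8"
proof -
  obtain v where v: "inj_on v {..<8}" "v ` {..<8} \<subseteq> X"
    "c = (\<lambda>i. {v i, v (Suc i mod 8)}) ` {..<8}" using cycle8_img[OF assms] by blast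
  have "inj_on (\<lambda>i. {v i, v (Suc i mod 8)}) {..<8}"
  proof (rule inj_onI)
    fix i j :: nat assume i: "i \<in> {..<8}" and j: "j \<in> {..<8}"
      and e: "{v i, v (Suc i mod 8)} = {v j, v (Suc j mod 8)}"
    have si: "Suc i mod 8 \<in> {..<8}" and sj: "Suc j mod 8 \<in> {..<8}" by auto
    from e have "(v i = v j \<and> v (Suc i mod 8) = v (Suc j mod 8)) \<or>
                 (v i = v (Suc j mod 8) \<and> v (Suc i mod 8) = v j)"
      by (auto simp: doubleton_eq_iff)
    then have "i = j \<or> (i = Suc j mod 8 \<and> Suc i mod 8 = j)"
      using inj_onD[OF v(1)] i j si sj by metis
    then show "i = j" using i j by auto presburger?
  qed
  then show ?thesis using v(3) by (simp add: card_image)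
qed

lemma cycle8_sub_kedges:
  assumes "cycle8 X c" shows "c \<subseteq> kedges X"
proof -
  obtain v where v: "inj_on v {..<8}" "v ` {..<8} \<subseteq> X"
    "c = (\<lambda>i. {v i, v (Suc i mod 8)}) ` {..<8}" using cycle8_img[OF assms] by blast
  { fix i :: nat assume i: "i < 8"
    have "v i \<noteq> v (Suc i mod 8)"
      using inj_onD[OF v(1), of i "Suc i mod 8"] i mod8_ne[OF i] by auto
    moreover have "v i \<in> X" "v (Suc i mod 8) \<in> X" using v(2) i by auto
    ultimately have "{v i, v (Suc i mod 8)} \<in> kedges X" by (auto simp: kedges_def) }
  then show ?thesis using v(3) by auto
qed

lemma star_cycle8:
  assumes "cycle8 X c" shows "even (card {e\<in>c. a \<in> e})"
proof -
  obtain v where v: "inj_on v {..<8}" "v ` {..<8} \<subseteq> X"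
    "c = (\<lambda>i. {v i, v (Suc i mod 8)}) ` {..<8}" using cycle8_img[OF assms] by blast
  show ?thesis
  proof (cases "a \<in> v ` {..<8}")
    case False
    then have "{e\<in>c. a \<in> e} = {}" using v(3) by auto
    then show ?thesis by (metis card.empty even_zero)
  next
    case True
    then obtain j where j: "j < 8" "a = v j" by auto
    define p where "p = (j + 7) mod 8"
    have p: "p < 8" "Suc p mod 8 = j" unfolding p_def using j by auto presburger?
    have "{e\<in>c. a \<in> e} = {{v j, v (Suc j mod 8)}, {v p, v j}}"
    proof
      show "{e\<in>c. a \<in> e} \<subseteq> {{v j, v (Suc j mod 8)}, {v p, v j}}"
      proof
        fix e assume "e \<in> {e\<in>c. a \<in> e}"
        then obtain i where i: "i < 8" "e = {v i, v (Suc i mod 8)}" "a \<in> e" using v(3) by auto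
        have "Suc i mod 8 < 8" by auto
        then have "j = i \<or> j = Suc i mod 8" using i j inj_onD[OF v(1)] by auto
        then show "e \<in> {{v j, v (Suc j mod 8)}, {v p, v j}}"
        proof
          assume "j = i" then show ?thesis using i by auto
        next
          assume "j = Suc i mod 8"
          then have "i = p" unfolding p_def using i by presburger
          then show ?thesis using i \<open>j = Suc i mod 8\<close> by auto
        qed
      qed
    next
      show "{{v j, v (Suc j mod 8)}, {v p, v j}} \<subseteq> {e\<in>c. a \<in> e}"
      proof -
        have "{v j, v (Suc j mod 8)} \<in> c" using v(3) j by auto
        moreover have "{v p, v (Suc p mod 8)} \<in> c" using v(3) p(1) by auto
        then have "{v p, v j} \<in> c" using p(2) by simp
        ultimately show ?thesis using j by auto
      qed
    qed
    moreover have "{v j, v (Suc j mod 8)} \<noteq> {v p, v j}"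
    proof
      assume "{v j, v (Suc j mod 8)} = {v p, v j}"
      then have "v (Suc j mod 8) = v p \<or> v (Suc j mod 8) = v j" by (auto simp: doubleton_eq_iff)
      moreover have "Suc j mod 8 \<noteq> p" "Suc j mod 8 \<noteq> j" unfolding p_def using j by presburger+
      moreover have "Suc j mod 8 < 8" by auto
      ultimately show False using inj_onD[OF v(1)] j p by blast
    qed
    ultimately show ?thesis by simp
  qed
qed


fun merge :: "nat list \<Rightarrow> nat list \<Rightarrow> nat list" where
  "merge [] ys = ys"
| "merge xs [] = xs"
| "merge (x#xs) (y#ys) = (if x \<le> y then x # merge xs (y#ys) else y # merge (x#xs) ys)"

function msort :: "nat list \<Rightarrow> nat list" where
  "msort [] = []"
| "msort [x] = [x]"
| "msort (x#y#zs) = merge (msort (take (Suc (Suc (length zs)) div 2) (x#y#zs)))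
                          (msort (drop (Suc (Suc (length zs)) div 2) (x#y#zs)))"
  by pat_completeness auto
termination by (relation "measure length") auto

lemma merge_set_len: "set (merge xs ys) = set xs \<union> set ys \<and> length (merge xs ys) = length xs + length ys"
  by (induction xs ys rule: merge.induct) auto

lemma msort_set_len: "set (msort xs) = set xs \<and> length (msort xs) = length xs"
proof (induction xs rule: msort.induct)
  case (3 x y zs)
  let ?k = "Suc (Suc (length zs)) div 2"
  have "set (msort (x#y#zs)) = set (take ?k (x#y#zs)) \<union> set (drop ?k (x#y#zs))"
    using 3 merge_set_len by (simp only: msort.simps)
  also have "\<dots> = set (x#y#zs)" by (metis append_take_drop_id set_append)
  finally have a: "set (msort (x#y#zs)) = set (x#y#zs)" .
  have "length (msort (x#y#zs)) = length (take ?k (x#y#zs)) + length (drop ?k (x#y#zs))"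
    using 3 merge_set_len by (simp only: msort.simps)
  also have "\<dots> = length (x#y#zs)" by (metis append_take_drop_id length_append)
  finally show ?case using a by blast
qed auto

fun ssorted :: "nat list \<Rightarrow> bool" where
  "ssorted (x#y#zs) = (x < y \<and> ssorted (y#zs))"
| "ssorted _ = True"

lemma ssorted_distinct: "ssorted xs \<Longrightarrow> distinct xs \<and> (\<forall>y\<in>set (tl xs). hd xs < y)"
  by (induction xs rule: ssorted.induct) fastforce+

definition ec :: "nat \<Rightarrow> nat \<Rightarrow> nat" where "ec x y = min x y * 64 + max x y"

fun edl :: "nat list \<Rightarrow> nat list" where
  "edl [a0,a1,a2,a3,a4,a5,a6,a7] = [ec a0 a1, ec a1 a2, ec a2 a3, ec a3 a4, ec a4 a5, ec a5 a6, ec a6 a7, ec a7 a0]"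
| "edl _ = []"

definition chk :: "(nat list \<times> nat list) list \<Rightarrow> nat list \<Rightarrow> bool" where
  "chk D E \<longleftrightarrow> list_all (\<lambda>(a,b). length a = 8 \<and> distinct a \<and> length b = 8 \<and> distinct b
      \<and> set a \<subseteq> set b \<and> set b \<subseteq> set a \<and> list_all (\<lambda>v. v < 64) a
      \<and> list_all (\<lambda>x. x \<notin> set (edl b)) (edl a)) D
    \<and> ssorted E \<and> msort (concat (map (edl \<circ> fst) D)) = E \<and> msort (concat (map (edl \<circ> snd) D)) = E"


definition dec :: "nat \<Rightarrow> nat set" where "dec c = {c div 64, c mod 64}"
definition cyc :: "nat list \<Rightarrow> nat set set" where
  "cyc a = {{a!i, a!((i+1) mod 8)} | i. i < 8}"
definition EC :: "nat set" where "EC = {c. c div 64 < c mod 64}"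

lemma dec_ec: "x < 64 \<Longrightarrow> y < 64 \<Longrightarrow> x \<noteq> y \<Longrightarrow> dec (ec x y) = {x, y} \<and> ec x y \<in> EC"
  unfolding dec_def ec_def EC_def by (auto simp: min_def max_def)

lemma inj_dec: "inj_on dec EC"
proof (rule inj_onI)
  fix c d assume c: "c \<in> EC" and d: "d \<in> EC" and e: "dec c = dec d"
  from e c d have "c div 64 = d div 64 \<and> c mod 64 = d mod 64"
    unfolding dec_def EC_def by (auto simp: doubleton_eq_iff)
  then show "c = d" by (metis div_mult_mod_eq)
qed

lemma len8: "length a = 8 \<Longrightarrow> \<exists>a0 a1 a2 a3 a4 a5 a6 a7. a = [a0,a1,a2,a3,a4,a5,a6,a7]"
  by (simp add: numeral_eq_Suc length_Suc_conv) blast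

lemma lt8: "{f i | i. i < (8::nat)} = {f 0, f 1, f 2, f 3, f 4, f 5, f 6, f 7}"
proof -
  have "{f i | i. i < (8::nat)} = f ` {..<8}" by auto
  also have "{..<(8::nat)} = {0,1,2,3,4,5,6,7}" by (auto simp: numeral_eq_Suc)
  finally show ?thesis by simp
qed

lemma cyc_edl:
  assumes "length a = 8" "distinct a" "\<forall>v\<in>set a. v < 64"
  shows "cyc a = dec ` set (edl a) \<and> set (edl a) \<subseteq> EC"
proof -
  obtain a0 a1 a2 a3 a4 a5 a6 a7 where a: "a = [a0,a1,a2,a3,a4,a5,a6,a7]" using len8[OF assms(1)] by blast
  have c: "cyc [a0,a1,a2,a3,a4,a5,a6,a7] = {{a0,a1},{a1,a2},{a2,a3},{a3,a4},{a4,a5},{a5,a6},{a6,a7},{a7,a0}}"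
    unfolding cyc_def lt8 by simp
  have lt: "a0 < 64" "a1 < 64" "a2 < 64" "a3 < 64" "a4 < 64" "a5 < 64" "a6 < 64" "a7 < 64"
    using assms(3) unfolding a by auto
  have ds: "a0 \<noteq> a1" "a1 \<noteq> a2" "a2 \<noteq> a3" "a3 \<noteq> a4" "a4 \<noteq> a5" "a5 \<noteq> a6" "a6 \<noteq> a7" "a7 \<noteq> a0"
    using assms(2) unfolding a by auto
  note dd = dec_ec[OF lt(1) lt(2) ds(1)] dec_ec[OF lt(2) lt(3) ds(2)] dec_ec[OF lt(3) lt(4) ds(3)]
    dec_ec[OF lt(4) lt(5) ds(4)] dec_ec[OF lt(5) lt(6) ds(5)] dec_ec[OF lt(6) lt(7) ds(6)]
    dec_ec[OF lt(7) lt(8) ds(7)] dec_ec[OF lt(8) lt(1) ds(8)]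
  show ?thesis unfolding a c using dd by simp
qed

lemma Union_cyc: "length a = 8 \<Longrightarrow> \<Union>(cyc a) = set a"
proof -
  assume l: "length a = 8"
  show ?thesis
  proof
    show "\<Union>(cyc a) \<subseteq> set a" unfolding cyc_def using l by auto
  next
    show "set a \<subseteq> \<Union>(cyc a)"
    proof
      fix x assume "x \<in> set a"
      then obtain i where i: "i < 8" "x = a!i" using l by (auto simp: in_set_conv_nth)
      then show "x \<in> \<Union>(cyc a)" unfolding cyc_def by blast
    qed
  qed
qed

lemma cycle8_cyc: "length a = 8 \<Longrightarrow> distinct a \<Longrightarrow> set a \<subseteq> X \<Longrightarrow> cycle8 X (cyc a)"
  unfolding cycle8_def cyc_def
  by (rule exI[of _ "nth a"]) (auto simp: inj_on_nth)


definition good :: "(nat set set \<times> nat set set) set \<Rightarrow> bool" where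
  "good P \<longleftrightarrow> (\<forall>p\<in>P. cycle8 UNIV (fst p) \<and> inside8 (fst p) (snd p)) \<and>
     (\<forall>p\<in>P. \<forall>q\<in>P. p \<noteq> q \<longrightarrow> fst p \<inter> fst q = {} \<and> snd p \<inter> snd q = {}) \<and>
     \<Union>(fst ` P) = \<Union>(snd ` P)"

lemma distinct_concat_disj:
  "distinct (concat (map f xs)) \<Longrightarrow> x \<in> set xs \<Longrightarrow> y \<in> set xs \<Longrightarrow> x \<noteq> y \<Longrightarrow> set (f x) \<inter> set (f y) = {}"
  by (induction xs) auto

lemma msort_distinct:
  assumes "msort xs = E" "ssorted E" shows "distinct xs \<and> set xs = set E"
proof -
  have d: "distinct E" using ssorted_distinct[OF assms(2)] by blast
  have s: "set xs = set E" "length xs = length E" using msort_set_len[of xs] assms(1) by auto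
  have "card (set xs) = length xs" using s d by (simp add: distinct_card)
  then show ?thesis using s card_distinct by blast
qed

definition pairs :: "(nat list \<times> nat list) list \<Rightarrow> (nat set set \<times> nat set set) set" where
  "pairs D = (\<lambda>(a,b). (cyc a, cyc b)) ` set D"


lemma chk_pr: "chk D E \<Longrightarrow> (a,b) \<in> set D \<Longrightarrow> length a = 8 \<and> distinct a \<and> length b = 8 \<and> distinct b
      \<and> set a = set b \<and> (\<forall>v\<in>set a. v < 64) \<and> set (edl a) \<inter> set (edl b) = {}"
  unfolding chk_def list_all_iff by auto

lemma chk_dist: "chk D E \<Longrightarrow> distinct (concat (map (edl \<circ> fst) D)) \<and> set (concat (map (edl \<circ> fst) D)) = set E
   \<and> distinct (concat (map (edl \<circ> snd) D)) \<and> set (concat (map (edl \<circ> snd) D)) = set E"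
proof -
  assume c: "chk D E"
  have h: "ssorted E" "msort (concat (map (edl \<circ> fst) D)) = E" "msort (concat (map (edl \<circ> snd) D)) = E"
    using c unfolding chk_def by blast+
  show ?thesis using msort_distinct[OF h(2) h(1)] msort_distinct[OF h(3) h(1)] by blast
qed

lemma chk_ce: "chk D E \<Longrightarrow> (a,b) \<in> set D \<Longrightarrow> cyc a = dec ` set (edl a) \<and> set (edl a) \<subseteq> EC
       \<and> cyc b = dec ` set (edl b) \<and> set (edl b) \<subseteq> EC"
proof -
  assume c: "chk D E" and ab: "(a,b) \<in> set D"
  note q = chk_pr[OF c ab]
  then have "\<forall>v\<in>set b. v < 64" by auto
  then show ?thesis using q cyc_edl by metis
qed


lemma chk_U1: assumes "chk D E" shows "\<Union>(fst ` pairs D) = dec ` set E"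
proof -
  have "\<Union>(fst ` pairs D) = (\<Union>p\<in>set D. cyc (fst p))" unfolding pairs_def by (auto split: prod.splits)
  also have "\<dots> = (\<Union>p\<in>set D. dec ` set (edl (fst p)))"
  proof (rule SUP_cong[OF refl])
    fix p assume "p \<in> set D"
    then have "(fst p, snd p) \<in> set D" by simp
    then show "cyc (fst p) = dec ` set (edl (fst p))" using chk_ce[OF assms] by blast
  qed
  also have "\<dots> = dec ` set (concat (map (edl \<circ> fst) D))" by auto
  finally show ?thesis using chk_dist[OF assms] by simp
qed

lemma chk_U2: assumes "chk D E" shows "\<Union>(snd ` pairs D) = dec ` set E"
proof -
  have "\<Union>(snd ` pairs D) = (\<Union>p\<in>set D. cyc (snd p))" unfolding pairs_def by (auto split: prod.splits)
  also have "\<dots> = (\<Union>p\<in>set D. dec ` set (edl (snd p)))"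
  proof (rule SUP_cong[OF refl])
    fix p assume "p \<in> set D"
    then have "(fst p, snd p) \<in> set D" by simp
    then show "cyc (snd p) = dec ` set (edl (snd p))" using chk_ce[OF assms] by blast
  qed
  also have "\<dots> = dec ` set (concat (map (edl \<circ> snd) D))" by auto
  finally show ?thesis using chk_dist[OF assms] by simp
qed

lemma chk_g1: assumes "chk D E" "p \<in> pairs D" shows "cycle8 UNIV (fst p) \<and> inside8 (fst p) (snd p)"
proof -
  obtain a b where ab: "(a,b) \<in> set D" "p = (cyc a, cyc b)" using assms(2) unfolding pairs_def by auto
  note q = chk_pr[OF assms(1) ab(1)] 
  note r = chk_ce[OF assms(1) ab(1)]
  have "cyc a \<inter> cyc b = dec ` (set (edl a) \<inter> set (edl b))"
    using r inj_on_image_Int[OF inj_dec, of "set (edl a)" "set (edl b)"] by simp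
  then have "cyc a \<inter> cyc b = {}" using q by simp
  moreover have "cycle8 UNIV (cyc a)" using q cycle8_cyc by blast
  moreover have "cycle8 (\<Union>(cyc a)) (cyc b)" using q cycle8_cyc Union_cyc by simp
  moreover have "\<Union>(cyc b) = \<Union>(cyc a)" using q Union_cyc by simp
  ultimately show ?thesis unfolding ab(2) inside8_def by simp
qed

lemma chk_g2: assumes "chk D E" "p \<in> pairs D" "q \<in> pairs D" "p \<noteq> q"
  shows "fst p \<inter> fst q = {} \<and> snd p \<inter> snd q = {}"
proof -
  obtain a b where ab: "(a,b) \<in> set D" "p = (cyc a, cyc b)" using assms(2) unfolding pairs_def by auto
  obtain a' b' where ab': "(a',b') \<in> set D" "q = (cyc a', cyc b')" using assms(3) unfolding pairs_def by auto
  have ne2: "(a,b) \<noteq> (a',b')" using assms(4) ab ab' by auto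
  have d: "distinct (concat (map (edl \<circ> fst) D))" "distinct (concat (map (edl \<circ> snd) D))"
    using chk_dist[OF assms(1)] by blast+
  have "set ((edl \<circ> fst) (a,b)) \<inter> set ((edl \<circ> fst) (a',b')) = {}"
    using distinct_concat_disj[OF d(1) ab(1) ab'(1) ne2] .
  then have e1: "set (edl a) \<inter> set (edl a') = {}" by simp
  have "set ((edl \<circ> snd) (a,b)) \<inter> set ((edl \<circ> snd) (a',b')) = {}"
    using distinct_concat_disj[OF d(2) ab(1) ab'(1) ne2] .
  then have e2: "set (edl b) \<inter> set (edl b') = {}" by simp
  note r = chk_ce[OF assms(1) ab(1)] chk_ce[OF assms(1) ab'(1)]
  have "cyc a \<inter> cyc a' = dec ` (set (edl a) \<inter> set (edl a'))"
    using r inj_on_image_Int[OF inj_dec, of "set (edl a)" "set (edl a')"] by simp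
  moreover have "cyc b \<inter> cyc b' = dec ` (set (edl b) \<inter> set (edl b'))"
    using r inj_on_image_Int[OF inj_dec, of "set (edl b)" "set (edl b')"] by simp
  ultimately show ?thesis using e1 e2 ab(2) ab'(2) by simp
qed

lemma chk_sound:
  assumes "chk D E"
  shows "good (pairs D) \<and> \<Union>(fst ` pairs D) = dec ` set E"
  unfolding good_def using chk_g1[OF assms] chk_g2[OF assms] chk_U1[OF assms] chk_U2[OF assms] by auto


lemma goodD1: "good P \<Longrightarrow> p \<in> P \<Longrightarrow> cycle8 UNIV (fst p) \<and> inside8 (fst p) (snd p)"
  unfolding good_def by (elim conjE) (erule bspec)
lemma goodD2: "good P \<Longrightarrow> p \<in> P \<Longrightarrow> q \<in> P \<Longrightarrow> p \<noteq> q \<Longrightarrow> fst p \<inter> fst q = {} \<and> snd p \<inter> snd q = {}"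
  unfolding good_def by (elim conjE) (drule bspec, assumption, drule bspec, assumption, erule mp, assumption)
lemma goodD3: "good P \<Longrightarrow> \<Union>(fst ` P) = \<Union>(snd ` P)"
  unfolding good_def by (elim conjE)
lemma goodI:
  assumes "\<And>p. p \<in> P \<Longrightarrow> cycle8 UNIV (fst p) \<and> inside8 (fst p) (snd p)"
    and "\<And>p q. p \<in> P \<Longrightarrow> q \<in> P \<Longrightarrow> p \<noteq> q \<Longrightarrow> fst p \<inter> fst q = {} \<and> snd p \<inter> snd q = {}"
    and "\<Union>(fst ` P) = \<Union>(snd ` P)"
  shows "good P"
  unfolding good_def
  apply (rule conjI) apply (rule ballI) apply (erule assms(1))
  apply (rule conjI) apply (rule ballI, rule ballI, rule impI) apply (erule (2) assms(2))
  apply (rule assms(3)) done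

lemma disj_sub: "A \<subseteq> X \<Longrightarrow> B \<subseteq> Y \<Longrightarrow> X \<inter> Y = {} \<Longrightarrow> A \<inter> B = {}" by blast

lemma good_UN:
  assumes g: "\<And>i. i \<in> I \<Longrightarrow> good (P i)"
    and d: "\<And>i j. i \<in> I \<Longrightarrow> j \<in> I \<Longrightarrow> i \<noteq> j \<Longrightarrow> \<Union>(fst ` P i) \<inter> \<Union>(fst ` P j) = {}"
  shows "good (\<Union>i\<in>I. P i)"
proof (rule goodI)
  fix p assume "p \<in> (\<Union>i\<in>I. P i)"
  then obtain i where i: "i \<in> I" "p \<in> P i" by blast
  show "cycle8 UNIV (fst p) \<and> inside8 (fst p) (snd p)" using goodD1[OF g[OF i(1)] i(2)] .
next
  fix p q assume p: "p \<in> (\<Union>i\<in>I. P i)" and q: "q \<in> (\<Union>i\<in>I. P i)" and ne: "p \<noteq> q"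
  from p obtain i where i: "i \<in> I" "p \<in> P i" by blast
  from q obtain j where j: "j \<in> I" "q \<in> P j" by blast
  show "fst p \<inter> fst q = {} \<and> snd p \<inter> snd q = {}"
  proof (cases "i = j")
    case True
    from True j(2) have "q \<in> P i" by simp
    from goodD2[OF g[OF i(1)] i(2) this ne] show ?thesis .
  next
    case False
    have a: "fst p \<subseteq> \<Union>(fst ` P i)" "fst q \<subseteq> \<Union>(fst ` P j)" using i(2) j(2) by auto
    have "snd p \<subseteq> \<Union>(snd ` P i)" "snd q \<subseteq> \<Union>(snd ` P j)" using i(2) j(2) by auto
    then have b: "snd p \<subseteq> \<Union>(fst ` P i)" "snd q \<subseteq> \<Union>(fst ` P j)"
      using goodD3[OF g[OF i(1)]] goodD3[OF g[OF j(1)]] by simp_all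
    have "\<Union>(fst ` P i) \<inter> \<Union>(fst ` P j) = {}" using d[OF i(1) j(1) False] .
    then show ?thesis using disj_sub[OF a(1) a(2)] disj_sub[OF b(1) b(2)] by simp
  qed
next
  have "\<Union>(fst ` (\<Union>i\<in>I. P i)) = (\<Union>i\<in>I. \<Union>(fst ` P i))" by auto
  also have "\<dots> = (\<Union>i\<in>I. \<Union>(snd ` P i))"
  proof (rule SUP_cong[OF refl])
    fix i assume "i \<in> I" then show "\<Union>(fst ` P i) = \<Union>(snd ` P i)" using goodD3[OF g] by blast
  qed
  also have "\<dots> = \<Union>(snd ` (\<Union>i\<in>I. P i))" by auto
  finally show "\<Union>(fst ` (\<Union>i\<in>I. P i)) = \<Union>(snd ` (\<Union>i\<in>I. P i))" .
qed

lemma good_Un: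
  assumes "good P" "good Q" "\<Union>(fst ` P) \<inter> \<Union>(fst ` Q) = {}"
  shows "good (P \<union> Q)"
proof -
  have "good (\<Union>i\<in>{True, False}. if i then P else Q)"
  proof (rule good_UN)
    fix i assume "i \<in> {True, False}" then show "good (if i then P else Q)" using assms by (cases i) simp_all
  next
    fix i j assume "i \<in> {True, False}" "j \<in> {True, False}" "i \<noteq> j"
    then show "\<Union>(fst ` (if i then P else Q)) \<inter> \<Union>(fst ` (if j then P else Q)) = {}"
      using assms(3) by (cases i; cases j) (simp_all add: Int_commute)
  qed
  then show ?thesis by (simp add: Un_commute)
qed

definition im :: "(nat \<Rightarrow> nat) \<Rightarrow> nat set set \<Rightarrow> nat set set" where
  "im g c = (\<lambda>e. g ` e) ` c"
definition imP :: "(nat \<Rightarrow> nat) \<Rightarrow> (nat set set \<times> nat set set) set \<Rightarrow> (nat set set \<times> nat set set) set" where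
  "imP g P = (\<lambda>p. (im g (fst p), im g (snd p))) ` P"

lemma cycle8_mono: "cycle8 X c \<Longrightarrow> X \<subseteq> Y \<Longrightarrow> cycle8 Y c"
  unfolding cycle8_def by blast

lemma cycle8_im:
  assumes "cycle8 X c" "inj_on g (\<Union>c)"
  shows "cycle8 (g ` X) (im g c)"
proof -
  obtain v :: "nat \<Rightarrow> nat" where v: "inj_on v {..<8}" "v ` {..<8} \<subseteq> X" "c = {{v i, v ((i + 1) mod 8)} | i. i < 8}"
    using assms(1) unfolding cycle8_def by blast
  have vs: "v ` {..<8} \<subseteq> \<Union>c" unfolding v(3) by auto
  have "inj_on g (v ` {..<8})" using assms(2) vs by (rule inj_on_subset)
  then have "inj_on (g \<circ> v) {..<8}" using comp_inj_on[OF v(1)] by blast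
  moreover have "(g \<circ> v) ` {..<8} \<subseteq> g ` X" using v(2) by auto
  moreover have "im g c = {{(g \<circ> v) i, (g \<circ> v) ((i + 1) mod 8)} | i. i < 8}"
  proof -
    have c2: "c = (\<lambda>i. {v i, v (Suc i mod 8)}) ` {..<8}" unfolding v(3) by (auto simp: image_def)
    have "im g c = (\<lambda>i. {(g \<circ> v) i, (g \<circ> v) (Suc i mod 8)}) ` {..<8}"
      unfolding c2 im_def image_image by simp
    also have "\<dots> = {{(g \<circ> v) i, (g \<circ> v) ((i + 1) mod 8)} | i. i < 8}" by (auto simp: image_def)
    finally show ?thesis .
  qed
  ultimately show ?thesis unfolding cycle8_def by blast
qed

lemma Union_im: "\<Union>(im g c) = g ` \<Union>c" unfolding im_def by auto

lemma im_Int: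
  assumes "inj_on g V" "\<Union>c \<subseteq> V" "\<Union>d \<subseteq> V" "c \<inter> d = {}"
  shows "im g c \<inter> im g d = {}"
proof -
  have "c \<subseteq> Pow V" "d \<subseteq> Pow V" using assms(2,3) by auto
  then have "(\<lambda>e. g ` e) ` (c \<inter> d) = im g c \<inter> im g d"
    unfolding im_def using inj_on_image_Int[OF inj_on_image_Pow[OF assms(1)], of c d] by simp
  then show ?thesis using assms(4) by simp
qed


lemma good_imP:
  assumes g: "good P" and inj: "inj_on g V" and V: "\<Union>(\<Union>(fst ` P)) \<subseteq> V"
  shows "good (imP g P) \<and> \<Union>(fst ` imP g P) = im g (\<Union>(fst ` P))"
proof -
  have Vp: "\<And>p. p \<in> P \<Longrightarrow> \<Union>(fst p) \<subseteq> V \<and> \<Union>(snd p) \<subseteq> V"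
  proof -
    fix p assume p: "p \<in> P"
    have "\<Union>(fst p) \<subseteq> \<Union>(\<Union>(fst ` P))" using p by auto
    moreover have "\<Union>(snd p) = \<Union>(fst p)" using goodD1[OF g p] unfolding inside8_def by simp
    ultimately show "\<Union>(fst p) \<subseteq> V \<and> \<Union>(snd p) \<subseteq> V" using V by simp
  qed
  have 3: "\<Union>(fst ` imP g P) = im g (\<Union>(fst ` P))" "\<Union>(snd ` imP g P) = im g (\<Union>(snd ` P))"
    unfolding imP_def im_def by auto
  have "good (imP g P)"
  proof (rule goodI)
    fix p' assume "p' \<in> imP g P"
    then obtain p where p: "p \<in> P" "p' = (im g (fst p), im g (snd p))" unfolding imP_def by auto
    have ij: "inj_on g (\<Union>(fst p))" "inj_on g (\<Union>(snd p))"
      using Vp[OF p(1)] inj inj_on_subset by blast+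
    have gp: "cycle8 UNIV (fst p)" "inside8 (fst p) (snd p)" using goodD1[OF g p(1)] by simp_all
    have "cycle8 (g ` UNIV) (im g (fst p))" using cycle8_im[OF gp(1) ij(1)] .
    then have c1: "cycle8 UNIV (im g (fst p))" using cycle8_mono by blast
    have ins: "cycle8 (\<Union>(fst p)) (snd p)" "\<Union>(snd p) = \<Union>(fst p)" "fst p \<inter> snd p = {}"
      using gp(2) unfolding inside8_def by simp_all
    have "cycle8 (g ` \<Union>(fst p)) (im g (snd p))" using cycle8_im[OF ins(1) ij(2)] .
    moreover have "\<Union>(im g (snd p)) = \<Union>(im g (fst p))" using ins(2) by (simp add: Union_im)
    moreover have "im g (fst p) \<inter> im g (snd p) = {}"
      using im_Int[OF inj _ _ ins(3)] Vp[OF p(1)] by simp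
    ultimately show "cycle8 UNIV (fst p') \<and> inside8 (fst p') (snd p')"
      unfolding p(2) inside8_def using c1 by (simp add: Union_im)
  next
    fix p' q' assume "p' \<in> imP g P" "q' \<in> imP g P" and ne: "p' \<noteq> q'"
    then obtain p q where p: "p \<in> P" "p' = (im g (fst p), im g (snd p))"
      and q: "q \<in> P" "q' = (im g (fst q), im g (snd q))" unfolding imP_def by auto
    have "p \<noteq> q" using ne p q by auto
    then have d: "fst p \<inter> fst q = {}" "snd p \<inter> snd q = {}" using goodD2[OF g p(1) q(1)] by simp_all
    have "im g (fst p) \<inter> im g (fst q) = {}" using im_Int[OF inj _ _ d(1)] Vp[OF p(1)] Vp[OF q(1)] by simp
    moreover have "im g (snd p) \<inter> im g (snd q) = {}" using im_Int[OF inj _ _ d(2)] Vp[OF p(1)] Vp[OF q(1)] by simp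
    ultimately show "fst p' \<inter> fst q' = {} \<and> snd p' \<inter> snd q' = {}" using p(2) q(2) by simp
  next
    show "\<Union>(fst ` imP g P) = \<Union>(snd ` imP g P)" using 3 goodD3[OF g] by simp
  qed
  then show ?thesis using 3 by simp
qed

lemma good_final:
  assumes g: "good P" and U: "\<Union>(fst ` P) = kedges X - L" and L: "L \<subseteq> kedges X"
    and mx: "\<forall>C' L'. packing8 X C' L' \<longrightarrow> card L \<le> card L'"
  shows "\<exists>C L. max_packing8 X C L \<and> almost_2perfect8 X C L"
proof -
  have kX: "\<Union>(kedges X) \<subseteq> X" unfolding kedges_def by auto
  have ne: "\<And>p. p \<in> P \<Longrightarrow> fst p \<noteq> {}"
  proof -
    fix p assume "p \<in> P"
    then have "card (fst p) = 8" using goodD1[OF g] card_cycle8 by blast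
    then show "fst p \<noteq> {}" by auto
  qed
  have uniq: "\<And>p q. p \<in> P \<Longrightarrow> q \<in> P \<Longrightarrow> fst p = fst q \<Longrightarrow> p = q"
  proof (rule ccontr)
    fix p q assume pq: "p \<in> P" "q \<in> P" "fst p = fst q" "p \<noteq> q"
    then have "fst p \<inter> fst q = {}" using goodD2[OF g] by blast
    then show False using pq(3) ne[OF pq(1)] by simp
  qed
  define f where "f c = snd (SOME p. p \<in> P \<and> fst p = c)" for c
  have fp: "\<And>p. p \<in> P \<Longrightarrow> f (fst p) = snd p"
  proof -
    fix p assume p: "p \<in> P"
    have "(SOME q. q \<in> P \<and> fst q = fst p) = p"
    proof (rule some_equality)
      show "p \<in> P \<and> fst p = fst p" using p by simp
      fix q assume "q \<in> P \<and> fst q = fst p" then show "q = p" using uniq p by blast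
    qed
    then show "f (fst p) = snd p" unfolding f_def by simp
  qed
  have fC: "f ` (fst ` P) = snd ` P" unfolding image_image using fp by (rule image_cong[OF refl])
  have sub1: "\<And>p. p \<in> P \<Longrightarrow> \<Union>(fst p) \<subseteq> X"
  proof -
    fix p assume "p \<in> P"
    then have "fst p \<subseteq> kedges X" using U by auto
    then show "\<Union>(fst p) \<subseteq> X" using kX by auto
  qed
  have pk1: "packing8 X (fst ` P) L"
  proof -
    have "\<forall>c\<in>fst ` P. cycle8 X c"
    proof
      fix c assume "c \<in> fst ` P"
      then obtain p where p: "p \<in> P" "c = fst p" by auto
      have "cycle8 UNIV c" using goodD1[OF g p(1)] p(2) by simp
      then obtain v :: "nat \<Rightarrow> nat" where v: "inj_on v {..<8}" "c = {{v i, v ((i + 1) mod 8)} | i. i < 8}"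
        unfolding cycle8_def by blast
      have "v ` {..<8} \<subseteq> \<Union>c" unfolding v(2) by auto
      then have "v ` {..<8} \<subseteq> X" using sub1[OF p(1)] p(2) by simp
      then show "cycle8 X c" using v unfolding cycle8_def by blast
    qed
    moreover have "pairwise (\<lambda>a b. a \<inter> b = {}) (fst ` P)"
      unfolding pairwise_def
    proof (intro ballI impI)
      fix a b assume "a \<in> fst ` P" "b \<in> fst ` P" "a \<noteq> b"
      then obtain p q where pq: "p \<in> P" "q \<in> P" "a = fst p" "b = fst q" by auto
      then have "p \<noteq> q" using \<open>a \<noteq> b\<close> by auto
      then show "a \<inter> b = {}" using goodD2[OF g pq(1) pq(2)] pq(3,4) by simp
    qed
    moreover have "L = kedges X - \<Union>(fst ` P)" using U L by auto
    ultimately show ?thesis unfolding packing8_def by blast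
  qed
  have pk2: "packing8 X (f ` fst ` P) L"
  proof -
    have "\<forall>c\<in>snd ` P. cycle8 X c"
    proof
      fix c assume "c \<in> snd ` P"
      then obtain p where p: "p \<in> P" "c = snd p" by auto
      have "cycle8 (\<Union>(fst p)) c" using goodD1[OF g p(1)] p(2) unfolding inside8_def by simp
      then show "cycle8 X c" using cycle8_mono sub1[OF p(1)] by blast
    qed
    moreover have "pairwise (\<lambda>a b. a \<inter> b = {}) (snd ` P)"
      unfolding pairwise_def
    proof (intro ballI impI)
      fix a b assume "a \<in> snd ` P" "b \<in> snd ` P" "a \<noteq> b"
      then obtain p q where pq: "p \<in> P" "q \<in> P" "a = snd p" "b = snd q" by auto
      then have "p \<noteq> q" using \<open>a \<noteq> b\<close> by auto
      then show "a \<inter> b = {}" using goodD2[OF g pq(1) pq(2)] pq(3,4) by simp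
    qed
    moreover have "L = kedges X - \<Union>(snd ` P)" using U L goodD3[OF g] by auto
    ultimately show ?thesis unfolding packing8_def fC by blast
  qed
  have "max_packing8 X (fst ` P) L" unfolding max_packing8_def using pk1 mx by blast
  moreover have "almost_2perfect8 X (fst ` P) L"
    unfolding almost_2perfect8_def
  proof (intro exI conjI)
    show "\<forall>c\<in>fst ` P. inside8 c (f c)" using fp goodD1[OF g] by auto
    show "packing8 X (f ` fst ` P) L" using pk2 .
  qed
  ultimately show ?thesis by blast
qed


lemma card_kedges: "finite X \<Longrightarrow> card (kedges X) = card X choose 2"
  unfolding kedges_def using n_subsets by blast

lemma finite_kedges: "finite X \<Longrightarrow> finite (kedges X)"
  unfolding kedges_def by (rule finite_subset[of _ "Pow X"]) auto

lemma star_kedges: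
  assumes "a \<in> X" "finite X"
  shows "card {e \<in> kedges X. a \<in> e} = card X - 1"
proof -
  have "{e \<in> kedges X. a \<in> e} = (\<lambda>y. {a, y}) ` (X - {a})"
  proof
    show "{e \<in> kedges X. a \<in> e} \<subseteq> (\<lambda>y. {a, y}) ` (X - {a})"
    proof
      fix e assume "e \<in> {e \<in> kedges X. a \<in> e}"
      then have e: "e \<subseteq> X" "card e = 2" "a \<in> e" unfolding kedges_def by auto
      then obtain x y where xy: "x \<noteq> y" "e = {x, y}" by (meson card_2_iff)
      then show "e \<in> (\<lambda>y. {a, y}) ` (X - {a})" using e by auto
    qed
  next
    show "(\<lambda>y. {a, y}) ` (X - {a}) \<subseteq> {e \<in> kedges X. a \<in> e}"
      using assms(1) unfolding kedges_def by auto
  qed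
  moreover have "inj_on (\<lambda>y. {a, y}) (X - {a})"
    by (rule inj_onI) (auto simp: doubleton_eq_iff)
  ultimately show ?thesis using assms by (simp add: card_image)
qed

lemma choose2_mod:
  assumes "n mod 16 = (15::nat)" shows "(n choose 2) mod 8 = 1"
proof -
  obtain q where n: "n = 16*q + 15" using assms by (metis mult.commute div_mult_mod_eq)
  define K where "K = 16*q*q + 29*q + 13"
  have "n * (n - 1) = 2 * (8 * K + 1)" unfolding n K_def by (simp add: algebra_simps)
  then have "n choose 2 = 8 * K + 1" by (simp add: choose_two)
  then show ?thesis by simp
qed


lemma lower_bound:
  fixes n :: nat
  assumes n: "n mod 16 = 15" and P: "packing8 {..<n} C L"
  shows "9 \<le> card L"
proof -
  let ?X = "{..<n::nat}"
  have cyc: "\<forall>c\<in>C. cycle8 ?X c" and dis: "pairwise (\<lambda>a b. a \<inter> b = {}) C"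
    and L: "L = kedges ?X - \<Union>C" using P unfolding packing8_def by auto
  have fk: "finite (kedges ?X)" by (simp add: finite_kedges)
  have sub: "\<forall>c\<in>C. c \<subseteq> kedges ?X" using cyc cycle8_sub_kedges by blast
  then have UC: "\<Union>C \<subseteq> kedges ?X" by auto
  have "C \<subseteq> Pow (kedges ?X)" using sub by auto
  then have fC: "finite C" using fk finite_subset by blast
  have fc: "\<forall>c\<in>C. finite c" using sub fk finite_subset by blast
  have cardU: "card (\<Union>C) = 8 * card C"
  proof -
    have "card (\<Union>C) = (\<Sum>c\<in>C. card c)"
    proof (rule card_Union_disjoint)
      show "pairwise disjnt C" using dis unfolding pairwise_def disjnt_def by blast
    qed (use fc in blast)
    also have "\<dots> = (\<Sum>c\<in>C. 8)" by (rule sum.cong[OF refl]) (use cyc card_cycle8 in blast)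
    finally show ?thesis by simp
  qed
  have cL: "card L + 8 * card C = n choose 2"
  proof -
    have "finite (\<Union>C)" using UC fk finite_subset by blast
    then have "card L = card (kedges ?X) - card (\<Union>C)" unfolding L using UC card_Diff_subset by blast
    moreover have "card (\<Union>C) \<le> card (kedges ?X)" using UC fk card_mono by blast
    ultimately show ?thesis using cardU card_kedges[of ?X] by simp
  qed
  then have m: "card L mod 8 = 1" using choose2_mod[OF n] by presburger
  have "card L \<noteq> 1"
  proof
    assume "card L = 1"
    then obtain e where Le: "L = {e}" using card_1_singletonE by blast
    then have "e \<in> kedges ?X" unfolding L by auto
    then have e: "e \<subseteq> ?X" "card e = 2" unfolding kedges_def by auto
    then have "e \<noteq> {}" by auto
    then obtain a where a1: "a \<in> e" by blast
    then have a: "a \<in> e" "a \<in> ?X" using e by auto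
    let ?S = "\<lambda>A. {x \<in> A. a \<in> x}"
    have split: "?S (kedges ?X) = ?S (\<Union>C) \<union> ?S L" and disj: "?S (\<Union>C) \<inter> ?S L = {}"
      unfolding L using UC by auto
    have f1: "finite (?S (\<Union>C))" "finite (?S L)"
      using finite_subset[OF _ fk, of "?S (\<Union>C)"] finite_subset[OF _ fk, of "?S L"] UC unfolding L by auto
    have "card (?S (kedges ?X)) = card (?S (\<Union>C)) + card (?S L)"
      unfolding split using card_Un_disjoint[OF f1 disj] .
    moreover have "card (?S L) = 1"
    proof -
      have "?S L = {e}" unfolding Le using a by auto
      then show ?thesis by simp
    qed
    moreover have "card (?S (kedges ?X)) = n - 1" using star_kedges[of a ?X] a by simp
    moreover have "even (card (?S (\<Union>C)))"
    proof -
      have "?S (\<Union>C) = (\<Union>c\<in>C. ?S c)" by auto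
      moreover have "card (\<Union>c\<in>C. ?S c) = (\<Sum>c\<in>C. card (?S c))"
      proof (rule card_UN_disjoint[OF fC])
        show "\<forall>c\<in>C. finite (?S c)" using fc by auto
        show "\<forall>c\<in>C. \<forall>d\<in>C. c \<noteq> d \<longrightarrow> ?S c \<inter> ?S d = {}"
        proof (intro ballI impI)
          fix c d assume "c \<in> C" "d \<in> C" "c \<noteq> d"
          then have "c \<inter> d = {}" using dis unfolding pairwise_def by blast
          then show "?S c \<inter> ?S d = {}" by auto
        qed
      qed
      moreover have "even (\<Sum>c\<in>C. card (?S c))"
      proof (rule dvd_sum)
        fix c assume "c \<in> C"
        then have "cycle8 ?X c" using cyc by blast
        from star_cycle8[OF this, of a] show "even (card (?S c))" .
      qed
      ultimately show ?thesis by simp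
    qed
    moreover have "odd n" using n by presburger
    ultimately have "even (n - 1) \<longleftrightarrow> False" by simp
    moreover have "even (n - 1)" using \<open>odd n\<close> by presburger
    ultimately show False by blast
  qed
  then show ?thesis using m by presburger
qed


definition D15 :: "(nat list \<times> nat list) list" where "D15 = [([1, 8, 5, 7, 2, 14, 11, 4], [14, 1, 7, 4, 8, 11, 2, 5]), ([2, 6, 3, 8, 0, 12, 9, 5], [12, 2, 8, 5, 6, 9, 0, 3]), ([0, 7, 4, 6, 1, 13, 10, 3], [13, 0, 6, 3, 7, 10, 1, 4]), ([2, 9, 13, 14, 7, 3, 12, 10], [2, 3, 9, 7, 12, 14, 10, 13]), ([0, 10, 14, 12, 8, 4, 13, 11], [0, 4, 10, 8, 13, 12, 11, 14]), ([1, 11, 12, 13, 6, 5, 14, 9], [1, 5, 11, 6, 14, 13, 9, 12]), ([1, 14, 8, 2, 3, 9, 7, 10], [9, 8, 1, 3, 14, 7, 2, 10]), ([2, 12, 6, 0, 4, 10, 8, 11], [10, 6, 2, 4, 12, 8, 0, 11]), ([0, 13, 7, 1, 5, 11, 6, 9], [11, 7, 0, 5, 13, 6, 1, 9]), ([2, 4, 14, 3, 11, 9, 8, 13], [8, 14, 2, 9, 4, 11, 13, 3]), ([0, 5, 12, 4, 9, 10, 6, 14], [6, 12, 0, 10, 5, 9, 14, 4]), ([1, 3, 13, 5, 10, 11, 7, 12], [7, 13, 1, 11, 3, 10, 12, 5])]"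
definition DB :: "(nat list \<times> nat list) list" where "DB = [([6, 19, 16, 10, 17, 8, 9, 21], [21, 16, 17, 6, 9, 19, 10, 8]), ([7, 20, 17, 11, 18, 9, 10, 22], [22, 17, 18, 7, 10, 20, 11, 9]), ([8, 21, 18, 12, 19, 10, 11, 6], [6, 18, 19, 8, 11, 21, 12, 10]), ([9, 22, 19, 13, 20, 11, 12, 7], [7, 19, 20, 9, 12, 22, 13, 11]), ([10, 6, 20, 14, 21, 12, 13, 8], [8, 20, 21, 10, 13, 6, 14, 12]), ([11, 7, 21, 15, 22, 13, 14, 9], [9, 21, 22, 11, 14, 7, 15, 13]), ([12, 8, 22, 16, 6, 14, 15, 10], [10, 22, 6, 12, 15, 8, 16, 14]), ([13, 9, 6, 17, 7, 15, 16, 11], [11, 6, 7, 13, 16, 9, 17, 15]), ([14, 10, 7, 18, 8, 16, 17, 12], [12, 7, 8, 14, 17, 10, 18, 16]), ([15, 11, 8, 19, 9, 17, 18, 13], [13, 8, 9, 15, 18, 11, 19, 17]), ([16, 12, 9, 20, 10, 18, 19, 14], [14, 9, 10, 16, 19, 12, 20, 18]), ([17, 13, 10, 21, 11, 19, 20, 15], [15, 10, 11, 17, 20, 13, 21, 19]), ([18, 14, 11, 22, 12, 20, 21, 16], [16, 11, 12, 18, 21, 14, 22, 20]), ([19, 15, 12, 6, 13, 21, 22, 17], [17, 12, 13, 19, 22, 15, 6, 21]), ([20, 16, 13, 7, 14, 22, 6, 18], [18, 13, 14, 20, 6, 16, 7, 22]), ([21, 17, 14, 8, 15, 6, 7, 19],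 [19, 14, 15, 21, 7, 17, 8, 6]), ([22, 18, 15, 9, 16, 7, 8, 20], [20, 15, 16, 22, 8, 18, 9, 7]), ([0, 14, 2, 15, 1, 10, 3, 20], [0, 15, 3, 14, 1, 20, 2, 10]), ([0, 11, 2, 16, 1, 7, 3, 21], [0, 16, 3, 11, 1, 21, 2, 7]), ([0, 12, 2, 17, 1, 8, 3, 22], [0, 17, 3, 12, 1, 22, 2, 8]), ([0, 13, 2, 18, 1, 9, 3, 19], [0, 18, 3, 13, 1, 19, 2, 9]), ([1, 12, 3, 17, 4, 7, 5, 20], [7, 1, 17, 5, 12, 4, 20, 3]), ([1, 13, 3, 18, 4, 8, 5, 21], [8, 1, 18, 5, 13, 4, 21, 3]), ([1, 14, 3, 15, 4, 9, 5, 22], [9, 1, 15, 5, 14, 4, 22, 3]), ([1, 11, 3, 16, 4, 10, 5, 19], [10, 1, 16, 5, 11, 4, 19, 3]), ([0, 10, 2, 21, 4, 14, 5, 15], [14, 0, 21, 5, 10, 4, 15, 2]), ([0, 7, 2, 22, 4, 11, 5, 16], [11, 0, 22, 5, 7, 4, 16, 2]), ([0, 8, 2, 19, 4, 12, 5, 17], [12, 0, 19, 5, 8, 4, 17, 2]), ([0, 9, 2, 20, 4, 13, 5, 18], [13, 0, 20, 5, 9, 4, 18, 2])]"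
definition D44 :: "(nat list \<times> nat list) list" where "D44 = [([0, 4, 1, 5, 2, 6, 3, 7], [0, 5, 3, 4, 2, 7, 1, 6]), ([0, 5, 3, 4, 2, 7, 1, 6], [0, 4, 1, 5, 2, 6, 3, 7])]"
definition L0c :: "nat list" where "L0c = [1, 2, 66, 196, 197, 261, 391, 392, 456]"

lemma chk15: "chk D15 [x*64+y. x \<leftarrow> [0..<15], y \<leftarrow> [Suc x..<15], x*64+y \<notin> set L0c]"
  by (simp add: chk_def D15_def ec_def L0c_def upt_rec)

lemma chkB: "chk DB [x*64+y. x \<leftarrow> [0..<23], y \<leftarrow> [max 7 (Suc x)..<23], True]"
  by (simp add: chk_def DB_def ec_def upt_rec)

lemma chk44: "chk D44 [x*64+y. x \<leftarrow> [0..<4], y \<leftarrow> [4..<8], True]"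
  by (simp add: chk_def D44_def ec_def upt_rec)


lemma dec_code: "x < 64 \<Longrightarrow> y < 64 \<Longrightarrow> dec (x*64+y) = {x, y}"
  unfolding dec_def by simp

lemma code_EC: "x < y \<Longrightarrow> y < 64 \<Longrightarrow> x*64+y \<in> EC"
  unfolding EC_def by simp

definition KC :: "nat \<Rightarrow> nat set" where "KC m = {x*64+y | x y. x < y \<and> y < m}"

lemma KC_EC: "m \<le> 64 \<Longrightarrow> KC m \<subseteq> EC"
  unfolding KC_def using code_EC by auto

lemma kedges_iff: "e \<in> kedges X \<longleftrightarrow> (\<exists>x y. x \<in> X \<and> y \<in> X \<and> x \<noteq> y \<and> e = {x, y})"
  unfolding kedges_def by (auto simp: card_2_iff)

lemma kedges_lt: "e \<in> kedges {..<m} \<longleftrightarrow> (\<exists>x y. x < y \<and> y < (m::nat) \<and> e = {x, y})"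
  unfolding kedges_iff
proof
  assume "\<exists>x y. x \<in> {..<m} \<and> y \<in> {..<m} \<and> x \<noteq> y \<and> e = {x, y}"
  then obtain x y where xy: "x < m" "y < m" "x \<noteq> y" "e = {x, y}" by auto
  show "\<exists>x y. x < y \<and> y < m \<and> e = {x, y}"
  proof (cases "x < y")
    case True then show ?thesis using xy by blast
  next
    case False then have "y < x" using xy(3) by simp
    then show ?thesis using xy by (intro exI[of _ y] exI[of _ x]) auto
  qed
next
  assume "\<exists>x y. x < y \<and> y < m \<and> e = {x, y}"
  then obtain x y where "x < y" "y < m" "e = {x, y}" by blast
  then show "\<exists>x y. x \<in> {..<m} \<and> y \<in> {..<m} \<and> x \<noteq> y \<and> e = {x, y}"
    by (intro exI[of _ x] exI[of _ y]) auto
qed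

lemma kedges_KC: "m \<le> 64 \<Longrightarrow> kedges {..<m} = dec ` KC m"
proof
  assume m: "m \<le> 64"
  show "kedges {..<m} \<subseteq> dec ` KC m"
  proof
    fix e assume "e \<in> kedges {..<m}"
    then obtain x y where xy: "x < y" "y < m" "e = {x, y}" using kedges_lt by blast
    then have "e = dec (x*64+y)" using dec_code m by simp
    moreover have "x*64+y \<in> KC m" unfolding KC_def using xy by blast
    ultimately show "e \<in> dec ` KC m" by blast
  qed
next
  assume m: "m \<le> 64"
  show "dec ` KC m \<subseteq> kedges {..<m}"
  proof
    fix e assume "e \<in> dec ` KC m"
    then obtain x y where xy: "x < y" "y < m" "e = dec (x*64+y)" unfolding KC_def by blast
    then have "e = {x, y}" using dec_code m by simp
    then show "e \<in> kedges {..<m}" using kedges_lt xy by blast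
  qed
qed

definition L0 :: "nat set set" where "L0 = dec ` set L0c"

lemma L0c_EC: "set L0c \<subseteq> EC" by (simp add: L0c_def EC_def)
lemma L0c_KC: "set L0c \<subseteq> KC 15"
proof
  fix c assume c: "c \<in> set L0c"
  have "\<forall>c\<in>set L0c. c div 64 < c mod 64 \<and> c mod 64 < 15" by (simp add: L0c_def)
  then have "c div 64 < c mod 64" "c mod 64 < 15" "c = (c div 64) * 64 + c mod 64" using c by auto
  then show "c \<in> KC 15" unfolding KC_def by blast
qed

lemma comp_mem: "z \<in> set [x*64+y. x \<leftarrow> [0..<a], y \<leftarrow> [f x..<b], P (x*64+y)] \<longleftrightarrow>
   (\<exists>x y. x < a \<and> f x \<le> y \<and> y < b \<and> P (x*64+y) \<and> z = x*64+y)"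
proof
  assume "z \<in> set [x*64+y. x \<leftarrow> [0..<a], y \<leftarrow> [f x..<b], P (x*64+y)]"
  then show "\<exists>x y. x < a \<and> f x \<le> y \<and> y < b \<and> P (x*64+y) \<and> z = x*64+y" by auto
next
  assume "\<exists>x y. x < a \<and> f x \<le> y \<and> y < b \<and> P (x*64+y) \<and> z = x*64+y"
  then obtain x y where xy: "x < a" "f x \<le> y" "y < b" "P (x*64+y)" "z = x*64+y" by blast
  show "z \<in> set [x*64+y. x \<leftarrow> [0..<a], y \<leftarrow> [f x..<b], P (x*64+y)]"
    apply (simp only: set_concat set_map)
    apply (rule UnionI[of "set (concat (map (\<lambda>y. if P (x*64+y) then [x*64+y] else []) [f x..<b]))"])
     apply (rule imageI) using xy apply simp
    apply (simp only: set_concat set_map)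
    apply (rule UnionI[of "set (if P (x*64+y) then [x*64+y] else [])"])
     apply (rule imageI) using xy apply simp
    using xy by simp
qed

lemma card_L0: "card L0 = 9"
proof -
  have "card L0 = card (set L0c)" unfolding L0_def
    using card_image inj_on_subset[OF inj_dec L0c_EC] by blast
  then show ?thesis by (simp add: L0c_def)
qed

lemma L0_sub: "L0 \<subseteq> kedges {..<15}"
  unfolding L0_def using kedges_KC[of 15] L0c_KC by auto

lemma base: "good (pairs D15) \<and> \<Union>(fst ` pairs D15) = kedges {..<15} - L0"
proof -
  have c: "good (pairs D15) \<and> \<Union>(fst ` pairs D15) = dec ` set [x*64+y. x \<leftarrow> [0..<15], y \<leftarrow> [Suc x..<15], x*64+y \<notin> set L0c]"
    using chk_sound[OF chk15] .
  have s: "set [x*64+y. x \<leftarrow> [0..<15], y \<leftarrow> [Suc x..<15], x*64+y \<notin> set L0c] = KC 15 - set L0c"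
  proof (rule set_eqI)
    fix z
    show "z \<in> set [x*64+y. x \<leftarrow> [0..<15], y \<leftarrow> [Suc x..<15], x*64+y \<notin> set L0c] \<longleftrightarrow> z \<in> KC 15 - set L0c"
      unfolding comp_mem[where a=15 and b=15 and f=Suc and P="\<lambda>c. c \<notin> set L0c"] KC_def
    proof
      assume "\<exists>x y. x < 15 \<and> Suc x \<le> y \<and> y < 15 \<and> x * 64 + y \<notin> set L0c \<and> z = x * 64 + y"
      then obtain x y where xy: "x < 15" "Suc x \<le> y" "y < 15" "x * 64 + y \<notin> set L0c" "z = x * 64 + y" by blast
      then have "x < y" by simp
      then have "z \<in> {x * 64 + y |x y. x < y \<and> y < 15}" using xy by blast
      then show "z \<in> {x * 64 + y |x y. x < y \<and> y < 15} - set L0c" using xy by simp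
    next
      assume "z \<in> {x * 64 + y |x y. x < y \<and> y < 15} - set L0c"
      then obtain x y where "x < y" "y < 15" "z = x * 64 + y" "z \<notin> set L0c" by blast
      then show "\<exists>x y. x < 15 \<and> Suc x \<le> y \<and> y < 15 \<and> x * 64 + y \<notin> set L0c \<and> z = x * 64 + y"
        by (intro exI[of _ x] exI[of _ y]) auto
    qed
  qed
  have "dec ` (KC 15 - set L0c) = dec ` KC 15 - dec ` set L0c"
    by (rule inj_on_image_set_diff[OF inj_dec]) (use KC_EC[of 15] L0c_EC in auto)
  then show ?thesis using c s kedges_KC[of 15] unfolding L0_def by simp
qed


lemma dec_comp:
  assumes "a \<le> 64" "b \<le> 64"
  shows "dec ` set [x*64+y. x \<leftarrow> [0..<a], y \<leftarrow> [f x..<b], P (x*64+y)] =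
         {{x, y} | x y. x < a \<and> f x \<le> y \<and> y < b \<and> P (x*64+y)}"
proof
  show "dec ` set [x*64+y. x \<leftarrow> [0..<a], y \<leftarrow> [f x..<b], P (x*64+y)] \<subseteq>
         {{x, y} | x y. x < a \<and> f x \<le> y \<and> y < b \<and> P (x*64+y)}"
  proof
    fix e assume "e \<in> dec ` set [x*64+y. x \<leftarrow> [0..<a], y \<leftarrow> [f x..<b], P (x*64+y)]"
    then obtain z where z: "z \<in> set [x*64+y. x \<leftarrow> [0..<a], y \<leftarrow> [f x..<b], P (x*64+y)]" "e = dec z" by blast
    from z(1) obtain x y where xy: "x < a" "f x \<le> y" "y < b" "P (x*64+y)" "z = x*64+y"
      unfolding comp_mem by blast
    then have "e = {x, y}" using z(2) dec_code assms by simp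
    then show "e \<in> {{x, y} | x y. x < a \<and> f x \<le> y \<and> y < b \<and> P (x*64+y)}" using xy by blast
  qed
next
  show "{{x, y} | x y. x < a \<and> f x \<le> y \<and> y < b \<and> P (x*64+y)} \<subseteq>
        dec ` set [x*64+y. x \<leftarrow> [0..<a], y \<leftarrow> [f x..<b], P (x*64+y)]"
  proof
    fix e assume "e \<in> {{x, y} | x y. x < a \<and> f x \<le> y \<and> y < b \<and> P (x*64+y)}"
    then obtain x y where xy: "x < a" "f x \<le> y" "y < b" "P (x*64+y)" "e = {x, y}" by blast
    then have "x*64+y \<in> set [x*64+y. x \<leftarrow> [0..<a], y \<leftarrow> [f x..<b], P (x*64+y)]"
      unfolding comp_mem by blast
    moreover have "e = dec (x*64+y)" using xy dec_code assms by simp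
    ultimately show "e \<in> dec ` set [x*64+y. x \<leftarrow> [0..<a], y \<leftarrow> [f x..<b], P (x*64+y)]" by blast
  qed
qed

lemma UB0: "good (pairs DB) \<and> \<Union>(fst ` pairs DB) = {{x, y} | x y. x < 23 \<and> max 7 (Suc x) \<le> y \<and> y < 23}"
  using chk_sound[OF chkB] dec_comp[where a=23 and b=23 and f="\<lambda>x. max 7 (Suc x)" and P="\<lambda>_. True"] by simp

lemma U440: "good (pairs D44) \<and> \<Union>(fst ` pairs D44) = {{x, y} | x y. x < 4 \<and> 4 \<le> y \<and> y < 8}"
  using chk_sound[OF chk44] dec_comp[where a=4 and b=8 and f="\<lambda>x. 4" and P="\<lambda>_. True"] by simp

definition PB :: "nat \<Rightarrow> (nat set set \<times> nat set set) set" where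
  "PB k = imP (\<lambda>i. i + (16*k+8)) (pairs DB)"
definition g44 :: "nat \<Rightarrow> nat \<Rightarrow> nat \<Rightarrow> nat \<Rightarrow> nat" where
  "g44 k a b i = (if i < 4 then 4*a+i else 16*k+15+4*b+(i-4))"
definition P44 :: "nat \<Rightarrow> nat \<Rightarrow> nat \<Rightarrow> (nat set set \<times> nat set set) set" where
  "P44 k a b = imP (g44 k a b) (pairs D44)"

definition UB :: "nat \<Rightarrow> nat set set" where
  "UB k = {{x + (16*k+8), y + (16*k+8)} | x y. x < 23 \<and> max 7 (Suc x) \<le> y \<and> y < 23}"
definition U44 :: "nat \<Rightarrow> nat \<Rightarrow> nat \<Rightarrow> nat set set" where
  "U44 k a b = {{4*a + x, 16*k+15+4*b+y} | x y. x < 4 \<and> y < 4}"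

lemma PB_good: "good (PB k) \<and> \<Union>(fst ` PB k) = UB k"
proof -
  have inj: "inj_on (\<lambda>i. i + (16*k+8)) UNIV" by (rule inj_onI) simp
  have g: "good (PB k) \<and> \<Union>(fst ` PB k) = im (\<lambda>i. i + (16*k+8)) (\<Union>(fst ` pairs DB))"
    unfolding PB_def using good_imP[OF conjunct1[OF UB0] inj] by simp
  have "im (\<lambda>i. i + (16*k+8)) {{x, y} | x y. x < 23 \<and> max 7 (Suc x) \<le> y \<and> y < 23} = UB k"
  proof
    show "im (\<lambda>i. i + (16*k+8)) {{x, y} | x y. x < 23 \<and> max 7 (Suc x) \<le> y \<and> y < 23} \<subseteq> UB k"
      unfolding im_def UB_def by auto
  next
    show "UB k \<subseteq> im (\<lambda>i. i + (16*k+8)) {{x, y} | x y. x < 23 \<and> max 7 (Suc x) \<le> y \<and> y < 23}"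
    proof
      fix e assume "e \<in> UB k"
      then obtain x y where xy: "x < 23" "max 7 (Suc x) \<le> y" "y < 23" "e = {x + (16*k+8), y + (16*k+8)}"
        unfolding UB_def by blast
      have m: "{x, y} \<in> {{x, y} | x y. x < 23 \<and> max 7 (Suc x) \<le> y \<and> y < 23}" using xy by blast
      have "e = (\<lambda>i. i + (16*k+8)) ` {x, y}" using xy by simp
      then show "e \<in> im (\<lambda>i. i + (16*k+8)) {{x, y} | x y. x < 23 \<and> max 7 (Suc x) \<le> y \<and> y < 23}"
        unfolding im_def using m by blast
    qed
  qed
  then show ?thesis using g UB0 by simp
qed

lemma P44_good:
  assumes a: "a < 4*k+2" and b: "b < 4"
  shows "good (P44 k a b) \<and> \<Union>(fst ` P44 k a b) = U44 k a b"
proof -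
  have inj: "inj_on (g44 k a b) {..<8}"
  proof (rule inj_onI)
    fix i j assume i: "i \<in> {..<8}" and j: "j \<in> {..<8}" and e: "g44 k a b i = g44 k a b j"
    show "i = j"
    proof (cases "i < 4"; cases "j < 4")
      assume "i < 4" "j < 4" then show ?thesis using e unfolding g44_def by simp
    next
      assume "i < 4" "\<not> j < 4" then show ?thesis using e a unfolding g44_def by simp
    next
      assume "\<not> i < 4" "j < 4" then show ?thesis using e a unfolding g44_def by simp
    next
      assume "\<not> i < 4" "\<not> j < 4" then show ?thesis using e unfolding g44_def by simp
    qed
  qed
  have V: "\<Union>(\<Union>(fst ` pairs D44)) \<subseteq> {..<8}" using U440 by auto
  have g: "good (P44 k a b) \<and> \<Union>(fst ` P44 k a b) = im (g44 k a b) (\<Union>(fst ` pairs D44))"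
    unfolding P44_def using good_imP[OF conjunct1[OF U440] inj V] by simp
  have "im (g44 k a b) {{x, y} | x y. x < 4 \<and> 4 \<le> y \<and> y < 8} = U44 k a b"
  proof
    show "im (g44 k a b) {{x, y} | x y. x < 4 \<and> 4 \<le> y \<and> y < 8} \<subseteq> U44 k a b"
    proof
      fix e assume "e \<in> im (g44 k a b) {{x, y} | x y. x < 4 \<and> 4 \<le> y \<and> y < 8}"
      then obtain x y where xy: "x < 4" "4 \<le> y" "y < 8" "e = {g44 k a b x, g44 k a b y}"
        unfolding im_def by auto
      then have "e = {4*a + x, 16*k+15+4*b+(y-4)}" unfolding g44_def by simp
      moreover have "y - 4 < 4" using xy by simp
      ultimately show "e \<in> U44 k a b" unfolding U44_def using xy(1) by blast
    qed
  next
    show "U44 k a b \<subseteq> im (g44 k a b) {{x, y} | x y. x < 4 \<and> 4 \<le> y \<and> y < 8}"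
    proof
      fix e assume "e \<in> U44 k a b"
      then obtain x y where xy: "x < 4" "y < 4" "e = {4*a + x, 16*k+15+4*b+y}" unfolding U44_def by blast
      have e1: "e = {g44 k a b x, g44 k a b (y+4)}" using xy unfolding g44_def by simp
      have "4 \<le> y+4" "y+4 < 8" using xy by simp_all
      then have m: "{x, y+4} \<in> {{x, y} | x y. x < 4 \<and> 4 \<le> y \<and> y < 8}" using xy(1) by blast
      have i1: "g44 k a b ` {x, y+4} \<in> (\<lambda>e. g44 k a b ` e) ` {{x, y} | x y. x < 4 \<and> 4 \<le> y \<and> y < 8}"
        using m by (rule imageI)
      have e2: "e = g44 k a b ` {x, y+4}" using e1 by simp
      show "e \<in> im (g44 k a b) {{x, y} | x y. x < 4 \<and> 4 \<le> y \<and> y < 8}"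
        unfolding im_def e2 by (rule i1)
    qed
  qed
  then show ?thesis using g U440 by simp
qed


lemma kedges_mem: "e \<in> kedges {..<m} \<Longrightarrow> z \<in> e \<Longrightarrow> z < (m::nat)"
  unfolding kedges_def by auto

lemma L0_mem: "e \<in> L0 \<Longrightarrow> z \<in> e \<Longrightarrow> z < 15"
  using L0_sub kedges_mem by blast

lemma UB_mem: "e \<in> UB k \<Longrightarrow> (\<exists>x y. 16*k+8 \<le> x \<and> x < y \<and> 16*k+15 \<le> y \<and> y < 16*k+31 \<and> e = {x, y})"
proof -
  assume "e \<in> UB k"
  then obtain x y where xy: "x < 23" "max 7 (Suc x) \<le> y" "y < 23" "e = {x + (16*k+8), y + (16*k+8)}"
    unfolding UB_def by blast
  show ?thesis by (rule exI[of _ "x + (16*k+8)"], rule exI[of _ "y + (16*k+8)"]) (use xy in auto)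
qed

lemma U44_mem: "e \<in> U44 k a b \<Longrightarrow> a < 4*k+2 \<Longrightarrow> b < 4 \<Longrightarrow>
   (\<exists>x y. x < 16*k+8 \<and> 16*k+15 \<le> y \<and> y < 16*k+31 \<and> e = {x, y} \<and> x div 4 = a \<and> (y - (16*k+15)) div 4 = b)"
proof -
  assume e: "e \<in> U44 k a b" and a: "a < 4*k+2" and b: "b < 4"
  then obtain x y where xy: "x < 4" "y < 4" "e = {4*a + x, 16*k+15+4*b+y}" unfolding U44_def by blast
  show ?thesis by (rule exI[of _ "4*a + x"], rule exI[of _ "16*k+15+4*b+y"]) (use xy a b in auto)
qed

lemma cover:
  "(kedges {..<16*k+15} - L0) \<union> UB k \<union> (\<Union>ab\<in>{..<4*k+2} \<times> {..<4}. U44 k (fst ab) (snd ab))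
     = kedges {..<16*k+31} - L0"
proof
  show "(kedges {..<16*k+15} - L0) \<union> UB k \<union> (\<Union>ab\<in>{..<4*k+2} \<times> {..<4}. U44 k (fst ab) (snd ab))
     \<subseteq> kedges {..<16*k+31} - L0"
  proof
    fix e assume "e \<in> (kedges {..<16*k+15} - L0) \<union> UB k \<union> (\<Union>ab\<in>{..<4*k+2} \<times> {..<4}. U44 k (fst ab) (snd ab))"
    then consider (o) "e \<in> kedges {..<16*k+15} - L0" | (b) "e \<in> UB k"
      | (f) a b where "a < 4*k+2" "b < 4" "e \<in> U44 k a b" by auto
    then show "e \<in> kedges {..<16*k+31} - L0"
    proof cases
      case o
      then obtain x y where xy: "x < y" "y < 16*k+15" "e = {x, y}" using kedges_lt by blast
      then have "\<exists>x' y'. x' < y' \<and> y' < 16*k+31 \<and> e = {x', y'}"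
        by (intro exI[of _ x] exI[of _ y]) simp
      then have "e \<in> kedges {..<16*k+31}" using kedges_lt[of e "16*k+31"] by blast
      then show ?thesis using o by blast
    next
      case b
      then obtain x y where xy: "16*k+8 \<le> x" "x < y" "16*k+15 \<le> y" "y < 16*k+31" "e = {x, y}"
        using UB_mem by blast
      then have "e \<in> kedges {..<16*k+31}" using kedges_lt[of e "16*k+31"] by blast
      moreover have "e \<notin> L0" using L0_mem[of e y] xy by auto
      ultimately show ?thesis by blast
    next
      case f
      then obtain x y where xy: "x < 16*k+8" "16*k+15 \<le> y" "y < 16*k+31" "e = {x, y}"
        using U44_mem by blast
      then have "x < y" by simp
      then have "e \<in> kedges {..<16*k+31}" using kedges_lt[of e "16*k+31"] xy by blast
      moreover have "e \<notin> L0" using L0_mem[of e y] xy by auto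
      ultimately show ?thesis by blast
    qed
  qed
next
  show "kedges {..<16*k+31} - L0 \<subseteq>
    (kedges {..<16*k+15} - L0) \<union> UB k \<union> (\<Union>ab\<in>{..<4*k+2} \<times> {..<4}. U44 k (fst ab) (snd ab))"
  proof
    fix e assume e: "e \<in> kedges {..<16*k+31} - L0"
    then obtain x y where xy: "x < y" "y < 16*k+31" "e = {x, y}" using kedges_lt by blast
    show "e \<in> (kedges {..<16*k+15} - L0) \<union> UB k \<union> (\<Union>ab\<in>{..<4*k+2} \<times> {..<4}. U44 k (fst ab) (snd ab))"
    proof (cases "y < 16*k+15")
      case True
      then have "e \<in> kedges {..<16*k+15}" using kedges_lt[of e "16*k+15"] xy by blast
      then show ?thesis using e by blast
    next
      case yN: False
      show ?thesis
      proof (cases "16*k+8 \<le> x")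
        case True
        define x' where "x' = x - (16*k+8)"
        define y' where "y' = y - (16*k+8)"
        have "x' < 23" "max 7 (Suc x') \<le> y'" "y' < 23" "e = {x' + (16*k+8), y' + (16*k+8)}"
          using True yN xy unfolding x'_def y'_def by auto
        then have "e \<in> UB k" unfolding UB_def by blast
        then show ?thesis by blast
      next
        case False
        define a where "a = x div 4"
        define b where "b = (y - (16*k+15)) div 4"
        define i where "i = x mod 4"
        define j where "j = (y - (16*k+15)) mod 4"
        have ab: "a < 4*k+2" "b < 4" using False yN xy unfolding a_def b_def by auto
        have "x = 4*a + i" "y = 16*k+15+4*b+j" "i < 4" "j < 4"
          using yN unfolding a_def b_def i_def j_def by auto
        then have "e \<in> U44 k a b" unfolding U44_def using xy(3) by blast
        then have "e \<in> (\<Union>ab\<in>{..<4*k+2} \<times> {..<4}. U44 k (fst ab) (snd ab))" using ab by force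
        then show ?thesis by blast
      qed
    qed
  qed
qed

lemma disj1: "(kedges {..<16*k+15} - L0) \<inter> UB k = {}"
proof -
  { fix e assume e1: "e \<in> kedges {..<16*k+15}" and e2: "e \<in> UB k"
    then obtain x y where "16*k+15 \<le> y" "e = {x, y}" using UB_mem by blast
    then have False using kedges_mem[OF e1, of y] by simp }
  then show ?thesis by blast
qed

lemma disj2: "((kedges {..<16*k+15} - L0) \<union> UB k) \<inter> (\<Union>ab\<in>{..<4*k+2} \<times> {..<4}. U44 k (fst ab) (snd ab)) = {}"
proof -
  { fix e a b assume e1: "e \<in> (kedges {..<16*k+15} - L0) \<union> UB k" and ab: "a < 4*k+2" "b < 4"
      and e2: "e \<in> U44 k a b"
    obtain x y where xy: "x < 16*k+8" "16*k+15 \<le> y" "e = {x, y}" using U44_mem[OF e2 ab] by blast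
    have False
    proof (cases "e \<in> UB k")
      case True
      then obtain x' y' where "16*k+8 \<le> x'" "x' < y'" "e = {x', y'}" using UB_mem by blast
      then show False using xy by (auto simp: doubleton_eq_iff)
    next
      case False
      then have ek: "e \<in> kedges {..<16*k+15}" using e1 by blast
      have "y \<in> e" using xy by simp
      then show False using kedges_mem[OF ek] xy by fastforce
    qed }
  then show ?thesis by force
qed

lemma disj3:
  assumes "a < 4*k+2" "b < 4" "a' < 4*k+2" "b' < 4" "(a, b) \<noteq> (a', b')"
  shows "U44 k a b \<inter> U44 k a' b' = {}"
proof -
  { fix e assume e1: "e \<in> U44 k a b" and e2: "e \<in> U44 k a' b'"
    obtain x y where xy: "x < 16*k+8" "16*k+15 \<le> y" "e = {x, y}" "x div 4 = a" "(y - (16*k+15)) div 4 = b"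
      using U44_mem[OF e1 assms(1,2)] by blast
    obtain x' y' where xy': "x' < 16*k+8" "16*k+15 \<le> y'" "e = {x', y'}" "x' div 4 = a'" "(y' - (16*k+15)) div 4 = b'"
      using U44_mem[OF e2 assms(3,4)] by blast
    have "x = x' \<and> y = y'" using xy xy' by (auto simp: doubleton_eq_iff)
    then have False using xy xy' assms(5) by simp }
  then show ?thesis by blast
qed

fun Dk :: "nat \<Rightarrow> (nat set set \<times> nat set set) set" where
  "Dk 0 = pairs D15"
| "Dk (Suc k) = (Dk k \<union> PB k) \<union> (\<Union>ab\<in>{..<4*k+2} \<times> {..<4}. P44 k (fst ab) (snd ab))"

lemma Dk_inv: "good (Dk k) \<and> \<Union>(fst ` Dk k) = kedges {..<16*k+15} - L0"
proof (induction k)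
  case 0 then show ?case using base by simp
next
  case (Suc k)
  let ?I = "{..<4*k+2} \<times> {..<4::nat}"
  have g1: "good (Dk k \<union> PB k)" using good_Un[of "Dk k" "PB k"] Suc PB_good disj1 by simp
  have u1: "\<Union>(fst ` (Dk k \<union> PB k)) = (kedges {..<16*k+15} - L0) \<union> UB k" using Suc PB_good by auto
  have gF: "good (\<Union>ab\<in>?I. P44 k (fst ab) (snd ab))"
  proof (rule good_UN)
    fix ab assume "ab \<in> ?I" then show "good (P44 k (fst ab) (snd ab))" using P44_good by auto
  next
    fix ab cd assume ab: "ab \<in> ?I" and cd: "cd \<in> ?I" and ne: "ab \<noteq> cd"
    have "U44 k (fst ab) (snd ab) \<inter> U44 k (fst cd) (snd cd) = {}"
      using disj3[of "fst ab" k "snd ab" "fst cd" "snd cd"] ab cd ne by (auto simp: prod_eq_iff)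
    moreover have "\<Union>(fst ` P44 k (fst ab) (snd ab)) = U44 k (fst ab) (snd ab)"
    proof -
      have "fst ab < 4*k+2" "snd ab < 4" using ab by auto
      from conjunct2[OF P44_good[OF this]] show ?thesis .
    qed
    moreover have "\<Union>(fst ` P44 k (fst cd) (snd cd)) = U44 k (fst cd) (snd cd)"
    proof -
      have "fst cd < 4*k+2" "snd cd < 4" using cd by auto
      from conjunct2[OF P44_good[OF this]] show ?thesis .
    qed
    ultimately show "\<Union>(fst ` P44 k (fst ab) (snd ab)) \<inter> \<Union>(fst ` P44 k (fst cd) (snd cd)) = {}"
      by simp
  qed
  have uF: "\<Union>(fst ` (\<Union>ab\<in>?I. P44 k (fst ab) (snd ab))) = (\<Union>ab\<in>?I. U44 k (fst ab) (snd ab))"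
  proof -
    have "\<Union>(fst ` (\<Union>ab\<in>?I. P44 k (fst ab) (snd ab))) = (\<Union>ab\<in>?I. \<Union>(fst ` P44 k (fst ab) (snd ab)))"
      by auto
    also have "\<dots> = (\<Union>ab\<in>?I. U44 k (fst ab) (snd ab))"
    proof (rule SUP_cong[OF refl])
      fix ab assume "ab \<in> ?I"
      then have "fst ab < 4*k+2" "snd ab < 4" by auto
      from conjunct2[OF P44_good[OF this]]
      show "\<Union>(fst ` P44 k (fst ab) (snd ab)) = U44 k (fst ab) (snd ab)" .
    qed
    finally show ?thesis .
  qed
  have g: "good (Dk (Suc k))"
    using good_Un[OF g1 gF] u1 uF disj2 by simp
  have "\<Union>(fst ` Dk (Suc k)) = (kedges {..<16*k+15} - L0) \<union> UB k \<union> (\<Union>ab\<in>?I. U44 k (fst ab) (snd ab))"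
    using u1 uF by (simp add: image_Un)
  also have "\<dots> = kedges {..<16*k+31} - L0" by (rule cover)
  finally have "\<Union>(fst ` Dk (Suc k)) = kedges {..<16 * Suc k + 15} - L0"
    by (simp add: add.commute)
  then show ?case using g by simp
qed


theorem lemma3p8:
  fixes n :: nat
  assumes "n mod 16 = 15" and "n \<ge> 15"
  shows "\<exists>C L. max_packing8 {..<n} C L \<and> almost_2perfect8 {..<n} C L"
proof -
  define k where "k = n div 16"
  have n: "n = 16*k+15" using assms(1) unfolding k_def by (metis div_mult_mod_eq mult.commute)
  have inv: "good (Dk k) \<and> \<Union>(fst ` Dk k) = kedges {..<n} - L0" using Dk_inv[of k] n by simp
  have sub: "L0 \<subseteq> kedges {..<n}"
  proof -
    have "kedges {..<15} \<subseteq> kedges {..<n}" using assms(2) unfolding kedges_def by auto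
    then show ?thesis using L0_sub by blast
  qed
  have mx: "\<forall>C' L'. packing8 {..<n} C' L' \<longrightarrow> card L0 \<le> card L'"
    using lower_bound[OF assms(1)] card_L0 by simp
  show ?thesis using good_final[OF conjunct1[OF inv] conjunct2[OF inv] sub mx] .
qed


end
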